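(* Let $A,B$ be strongly regular graphs with the same parameters $\sigma(A)=(n,d,\lambda,\mu)$, and let $A',B'$ be partially colored versions with port vertices $a_1,\dots,a_m$, $b_1,\dots,b_m$ as in the construction, such that $\tau(a_i)=\tau(b_i)$ for all $i$. Then for vertices $x,y$ of $G(A',B')$, the sequence $(w_k(x,y))_{k\ge0}$ is determined solely by $\eta(x,y)$, $\tau(A')$ and $\sigma(A)$: if $(\hat A',\hat B')$ is another such pair with $\sigma(\hat A)=\sigma(A)$ and $\tau(\hat A')=\tau(A')$, and $x,y\in V(G(A',B'))$, $\hat x,\hat y\in V(G(\hat A',\hat B'))$ satisfy $\eta(x,y)=\eta(\hat x,\hat y)$, then $w_k(x,y)=w_k(\hat x,\hat y)$ for all $k\ge0$.
   Context: Graphs are finite, simple and undirected. A strongly regular graph with parameters $(n,d,\lambda,\mu)$ is an $n$-vertex $d$-regular graph in which any two adjacent vertices have $\lambda$ common neighbours and any two distinct non-adjacent vertices have $\mu$ common neighbours. $A'$ (resp. $B'$) is $A$ (resp. $B$) with $a_i$ (resp. $b_i$) colored $i$ for $i=1,\dots,m$ and all other vertices uncolored. Construction $G(A',B')$ (uncolored): the vertex-disjoint union of $A$ and $B$, plus for each $i$ a connecting vertex $c_i$ adjacent to $a_i$ and $b_i$ and $i$ pendant vertices $p_{i,1},\dots,p_{i,i}$ adjacent only to $c_i$. $w_k(x,y)$ is the number of walks of length $k$ from $x$ to $y$ in $G(A',B')$. Color refinement on a vertex-colored graph $X$: $C^0_X(x)$ is the color of $x$ (common default for uncolored vertices), $C^{1}_X(x)=\big(C^0_X(x),\{\!\{C^0_X(y)\}\!\}_{y\in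 N(x)}\big)$. Types: $\tau(x)=C^1_{A'}(x)$ for $x\in V(A)$, $\tau(x)=C^1_{B'}(x)$ for $x\in V(B)$, $\tau(c_i)=(\mathfrak c,\tau(a_i))$, $\tau(p_{i,h})=(\mathfrak p,\tau(a_i))$ for special symbols $\mathfrak c,\mathfrak p$. $\tau(A')=(\tau(a_1),\dots,\tau(a_m))$. $D(x,y)=1$ iff $x,y$ both lie in the $A$-part or both in the $B$-part, else $0$; $I(x,y)=1$ iff $x=y$; $A(x,y)=1$ iff $x,y$ adjacent. $\eta(x,y)=(\tau(x),D(x,y),I(x,y),A(x,y),\tau(y))$. *)

theory Defs
  imports Main "HOL-Library.Multiset"
begin

definition simple_graph :: "'v set \<Rightarrow> ('v \<Rightarrow> 'v \<Rightarrow> bool) \<Rightarrow> bool" where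
  "simple_graph V E \<longleftrightarrow> finite V \<and> (\<forall>x y. E x y \<longrightarrow> x \<in> V \<and> y \<in> V)
     \<and> (\<forall>x y. E x y \<longrightarrow> E y x) \<and> (\<forall>x. \<not> E x x)"

definition strongly_regular ::
  "'v set \<Rightarrow> ('v \<Rightarrow> 'v \<Rightarrow> bool) \<Rightarrow> nat \<Rightarrow> nat \<Rightarrow> nat \<Rightarrow> nat \<Rightarrow> bool" where
  "strongly_regular V E n d lam mu \<longleftrightarrow> simple_graph V E \<and> card V = n
     \<and> (\<forall>x\<in>V. card {y\<in>V. E x y} = d)
     \<and> (\<forall>x\<in>V. \<forall>y\<in>V. x \<noteq> y \<longrightarrow> E x y \<longrightarrow> card {z\<in>V. E x z \<and> E y z} = lam)
     \<and> (\<forall>x\<in>V. \<forall>y\<in>V. x \<noteq> y \<longrightarrow> \<not> E x y \<longrightarrow> card {z\<in>V. E x z \<and> E y z} = mu)"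

definition col0 :: "(nat \<Rightarrow> 'v) \<Rightarrow> nat \<Rightarrow> 'v \<Rightarrow> nat option" where
  "col0 a m x = (if \<exists>i\<in>{1..m}. a i = x then Some (THE i. i \<in> {1..m} \<and> a i = x) else None)"

type_synonym colour1 = "nat option \<times> nat option multiset"

definition col1 :: "'v set \<Rightarrow> ('v \<Rightarrow> 'v \<Rightarrow> bool) \<Rightarrow> (nat \<Rightarrow> 'v) \<Rightarrow> nat \<Rightarrow> 'v \<Rightarrow> colour1" where
  "col1 V E a m x = (col0 a m x, image_mset (col0 a m) (mset_set {y\<in>V. E x y}))"

datatype ('a, 'b) gvert = VA 'a | VB 'b | VC nat | VP nat nat

definition gverts :: "'a set \<Rightarrow> 'b set \<Rightarrow> nat \<Rightarrow> ('a, 'b) gvert set" where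
  "gverts VA' VB' m = VA ` VA' \<union> VB ` VB' \<union> VC ` {1..m}
     \<union> {VP i h | i h. 1 \<le> i \<and> i \<le> m \<and> 1 \<le> h \<and> h \<le> i}"

fun gadj :: "('a \<Rightarrow> 'a \<Rightarrow> bool) \<Rightarrow> ('b \<Rightarrow> 'b \<Rightarrow> bool) \<Rightarrow> (nat \<Rightarrow> 'a) \<Rightarrow> (nat \<Rightarrow> 'b) \<Rightarrow> nat
              \<Rightarrow> ('a, 'b) gvert \<Rightarrow> ('a, 'b) gvert \<Rightarrow> bool" where
  "gadj EA EB a b m (VA x) (VA y) = EA x y"
| "gadj EA EB a b m (VB x) (VB y) = EB x y"
| "gadj EA EB a b m (VA x) (VC i) = (1 \<le> i \<and> i \<le> m \<and> x = a i)"
| "gadj EA EB a b m (VC i) (VA x) = (1 \<le> i \<and> i \<le> m \<and> x = a i)"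
| "gadj EA EB a b m (VB x) (VC i) = (1 \<le> i \<and> i \<le> m \<and> x = b i)"
| "gadj EA EB a b m (VC i) (VB x) = (1 \<le> i \<and> i \<le> m \<and> x = b i)"
| "gadj EA EB a b m (VC i) (VP j h) = (i = j \<and> 1 \<le> i \<and> i \<le> m \<and> 1 \<le> h \<and> h \<le> i)"
| "gadj EA EB a b m (VP j h) (VC i) = (i = j \<and> 1 \<le> i \<and> i \<le> m \<and> 1 \<le> h \<and> h \<le> i)"
| "gadj EA EB a b m _ _ = False"

fun walks :: "'v set \<Rightarrow> ('v \<Rightarrow> 'v \<Rightarrow> bool) \<Rightarrow> nat \<Rightarrow> 'v \<Rightarrow> 'v \<Rightarrow> nat" where
  "walks V E 0 x y = (if x = y then 1 else 0)"
| "walks V E (Suc k) x y = (\<Sum>z\<in>{z\<in>V. E x z}. walks V E k z y)"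

(* types tau; TConn / TPend play the role of the special symbols c, p *)
datatype vtype = TBase colour1 | TConn colour1 | TPend colour1

fun gtau :: "'a set \<Rightarrow> ('a \<Rightarrow> 'a \<Rightarrow> bool) \<Rightarrow> (nat \<Rightarrow> 'a) \<Rightarrow>
             'b set \<Rightarrow> ('b \<Rightarrow> 'b \<Rightarrow> bool) \<Rightarrow> (nat \<Rightarrow> 'b) \<Rightarrow> nat \<Rightarrow> ('a, 'b) gvert \<Rightarrow> vtype" where
  "gtau VA' EA a VB' EB b m (VA x) = TBase (col1 VA' EA a m x)"
| "gtau VA' EA a VB' EB b m (VB x) = TBase (col1 VB' EB b m x)"
| "gtau VA' EA a VB' EB b m (VC i) = TConn (col1 VA' EA a m (a i))"
| "gtau VA' EA a VB' EB b m (VP i h) = TPend (col1 VA' EA a m (a i))"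

definition tau_seq :: "'a set \<Rightarrow> ('a \<Rightarrow> 'a \<Rightarrow> bool) \<Rightarrow> (nat \<Rightarrow> 'a) \<Rightarrow> nat \<Rightarrow> colour1 list" where
  "tau_seq VA' EA a m = map (\<lambda>i. col1 VA' EA a m (a i)) [1..<m+1]"

fun same_part :: "('a, 'b) gvert \<Rightarrow> ('a, 'b) gvert \<Rightarrow> bool" where
  "same_part (VA _) (VA _) = True"
| "same_part (VB _) (VB _) = True"
| "same_part _ _ = False"

definition eta :: "'a set \<Rightarrow> ('a \<Rightarrow> 'a \<Rightarrow> bool) \<Rightarrow> (nat \<Rightarrow> 'a) \<Rightarrow>
             'b set \<Rightarrow> ('b \<Rightarrow> 'b \<Rightarrow> bool) \<Rightarrow> (nat \<Rightarrow> 'b) \<Rightarrow> nat \<Rightarrow> ('a, 'b) gvert \<Rightarrow> ('a, 'b) gvert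
             \<Rightarrow> vtype \<times> bool \<times> bool \<times> bool \<times> vtype" where
  "eta VA' EA a VB' EB b m x y =
     (gtau VA' EA a VB' EB b m x, same_part x y, x = y, gadj EA EB a b m x y, gtau VA' EA a VB' EB b m y)"

definition valid_pair :: "'a set \<Rightarrow> ('a \<Rightarrow> 'a \<Rightarrow> bool) \<Rightarrow> (nat \<Rightarrow> 'a) \<Rightarrow>
             'b set \<Rightarrow> ('b \<Rightarrow> 'b \<Rightarrow> bool) \<Rightarrow> (nat \<Rightarrow> 'b) \<Rightarrow> nat \<Rightarrow> nat \<Rightarrow> nat \<Rightarrow> nat \<Rightarrow> nat \<Rightarrow> bool" where
  "valid_pair VA' EA a VB' EB b m n d lam mu \<longleftrightarrow>
     strongly_regular VA' EA n d lam mu \<and> strongly_regular VB' EB n d lam mu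
     \<and> inj_on a {1..m} \<and> a ` {1..m} \<subseteq> VA'
     \<and> inj_on b {1..m} \<and> b ` {1..m} \<subseteq> VB'
     \<and> (\<forall>i\<in>{1..m}. col1 VA' EA a m (a i) = col1 VB' EB b m (b i))"

end

theory Submission
  imports Defs
begin


lemma col0_Some_iff:
  assumes "inj_on a {1..m}"
  shows "col0 a m x = Some j \<longleftrightarrow> (j \<in> {1..m} \<and> a j = x)"
proof (cases "\<exists>i\<in>{1..m}. a i = x")
  case True
  then obtain i where i: "i \<in> {1..m}" "a i = x" by blast
  have th: "(THE i. i \<in> {1..m} \<and> a i = x) = i"
    using i assms by (auto intro!: the_equality dest: inj_onD)
  show ?thesis using True i th assms unfolding col0_def by (auto dest: inj_onD)
next
  case False
  then show ?thesis unfolding col0_def by auto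
qed

lemma count_col1:
  assumes "inj_on a {1..m}" "a ` {1..m} \<subseteq> V" "finite V"
  shows "count (snd (col1 V E a m u)) (Some j) = (if j \<in> {1..m} \<and> E u (a j) then 1 else 0)"
proof -
  have pre: "col0 a m -` {Some j} = (if j \<in> {1..m} then {a j} else {})"
    using col0_Some_iff[OF assms(1)] by auto
  have "count (snd (col1 V E a m u)) (Some j) = card (col0 a m -` {Some j} \<inter> {y\<in>V. E u y})"
    unfolding col1_def using assms(3) by (simp add: count_image_mset)
  also have "\<dots> = (if j \<in> {1..m} \<and> E u (a j) then 1 else 0)"
  proof (cases "j \<in> {1..m} \<and> E u (a j)")
    case True
    then have "a j \<in> V" using assms(2) by auto
    then have "{a j} \<inter> {y\<in>V. E u y} = {a j}" using True by auto
    then show ?thesis using True unfolding pre by simp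
  next
    case False
    then show ?thesis unfolding pre by auto
  qed
  finally show ?thesis .
qed

definition idx :: "nat \<Rightarrow> nat list" where "idx m = [1..<m+1]"

datatype lab = LOne bool | LE bool nat | LN bool nat | LC nat | LP nat | LEY | LNY
datatype ykind = YBase "nat \<Rightarrow> bool" "nat \<Rightarrow> bool" | YConn nat | YPend nat

fun Rl :: "nat \<Rightarrow> nat \<Rightarrow> nat \<Rightarrow> nat \<Rightarrow> (nat \<Rightarrow> nat \<Rightarrow> bool) \<Rightarrow> ykind \<Rightarrow> lab \<Rightarrow> (int \<times> lab) list" where
  "Rl d lam mu m PA yk (LOne q) = (int d, LOne q) # map (\<lambda>i. (1, LC i)) (idx m)"
| "Rl d lam mu m PA yk (LE q j) = [(1, LN q j), (1, LC j)]"
| "Rl d lam mu m PA yk (LN q j) = (if 1 \<le> j \<and> j \<le> m then [(int d - int mu, LE q j), (int lam - int mu, LN q j), (int mu, LOne q)]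
      @ map (\<lambda>i. (of_bool (PA i j), LC i)) (idx m) else [])"
| "Rl d lam mu m PA yk (LC j) = [(1, LE False j), (1, LE True j), (1, LP j)]"
| "Rl d lam mu m PA yk (LP j) = [(int j, LC j)]"
| "Rl d lam mu m PA yk LEY = (case yk of
      YBase ye ya \<Rightarrow> (1, LNY) # map (\<lambda>i. (of_bool (ye i), LC i)) (idx m)
    | YConn j \<Rightarrow> [(1, LE False j), (1, LE True j), (1, LP j)]
    | YPend j \<Rightarrow> [(1, LC j)])"
| "Rl d lam mu m PA yk LNY = (case yk of
      YBase ye ya \<Rightarrow> [(int d - int mu, LEY), (int lam - int mu, LNY), (int mu, LOne False)]
         @ map (\<lambda>i. (of_bool (ya i), LC i)) (idx m)
    | _ \<Rightarrow> [])"

definition stp :: "(lab \<Rightarrow> (int \<times> lab) list) \<Rightarrow> (int \<times> lab) list \<Rightarrow> (int \<times> lab) list" where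
  "stp R e = concat (map (\<lambda>(c,l). map (\<lambda>(c',l'). (c*c', l')) (R l)) e)"

definition ev :: "(lab \<Rightarrow> 'v \<Rightarrow> int) \<Rightarrow> (int \<times> lab) list \<Rightarrow> 'v \<Rightarrow> int" where
  "ev F e x = sum_list (map (\<lambda>(c,l). c * F l x) e)"

lemma ev_Nil[simp]: "ev F [] x = 0" by (simp add: ev_def)
lemma ev_Cons[simp]: "ev F ((c,l)#e) x = c * F l x + ev F e x" by (simp add: ev_def)
lemma ev_append[simp]: "ev F (e1 @ e2) x = ev F e1 x + ev F e2 x" by (simp add: ev_def)
lemma ev_mapC[simp]: "ev F (map (\<lambda>i. (cf i, LC i)) (idx m)) x = (\<Sum>i\<in>{1..m}. cf i * F (LC i) x)"
proof -
  have "ev F (map (\<lambda>i. (cf i, LC i)) (idx m)) x = sum_list (map (\<lambda>i. cf i * F (LC i) x) [1..<m+1])"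
    by (simp add: ev_def comp_def idx_def)
  also have "\<dots> = (\<Sum>i\<in>{1..<m+1}. cf i * F (LC i) x)"
    by (metis distinct_upt set_upt sum_list_distinct_conv_sum_set)
  also have "{1..<m+1} = {1..m}" by auto
  finally show ?thesis .
qed

lemma ev_scale: "ev F (map (\<lambda>(c',l'). (c*c', l')) L) x = c * ev F L x"
  by (induction L) (auto simp: algebra_simps)

lemma ev_stp:
  assumes fin: "finite S"
    and cl: "\<And>l. (\<Sum>z\<in>S. F l z) = ev F (R l) x"
  shows "(\<Sum>z\<in>S. ev F e z) = ev F (stp R e) x"
proof (induction e)
  case Nil
  then show ?case by (simp add: stp_def)
next
  case (Cons p e)
  obtain c l where p: "p = (c,l)" by (cases p)
  have "(\<Sum>z\<in>S. ev F (p#e) z) = c * (\<Sum>z\<in>S. F l z) + (\<Sum>z\<in>S. ev F e z)"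
    by (simp add: p sum.distrib sum_distrib_left)
  also have "\<dots> = ev F (stp R (p#e)) x"
    using Cons cl[of l] by (simp add: p stp_def ev_scale)
  finally show ?case .
qed

lemma walks_ev:
  assumes fin: "finite V"
    and cl: "\<And>l x. x \<in> V \<Longrightarrow> (\<Sum>z\<in>{z\<in>V. E x z}. F l z) = ev F (R l) x"
    and ey: "\<And>x. x \<in> V \<Longrightarrow> F LEY x = of_bool (x = y)"
  shows "x \<in> V \<Longrightarrow> int (walks V E k x y) = ev F ((stp R ^^ k) [(1, LEY)]) x"
proof (induction k arbitrary: x)
  case 0
  then show ?case using ey by simp
next
  case (Suc k)
  have "int (walks V E (Suc k) x y) = (\<Sum>z\<in>{z\<in>V. E x z}. int (walks V E k z y))"
    by simp
  also have "\<dots> = (\<Sum>z\<in>{z\<in>V. E x z}. ev F ((stp R ^^ k) [(1, LEY)]) z)"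
    using Suc.IH by (intro sum.cong) auto
  also have "\<dots> = ev F (stp R ((stp R ^^ k) [(1, LEY)])) x"
    by (rule ev_stp) (use fin cl Suc.prems in auto)
  finally show ?case by simp
qed

lemma ev_cong: "(\<And>l. F1 l x1 = F2 l x2) \<Longrightarrow> ev F1 e x1 = ev F2 e x2"
  by (simp add: ev_def)


fun isB :: "vtype \<Rightarrow> bool" where "isB (TBase _) = True" | "isB _ = False"
fun bcol :: "vtype \<Rightarrow> nat option" where "bcol (TBase c) = fst c" | "bcol _ = None"
fun bcnt :: "vtype \<Rightarrow> nat \<Rightarrow> bool" where "bcnt (TBase c) j = (count (snd c) (Some j) = 1)" | "bcnt _ j = False"
fun ccol :: "vtype \<Rightarrow> nat option" where "ccol (TConn c) = fst c" | "ccol _ = None"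
fun pcol :: "vtype \<Rightarrow> nat option" where "pcol (TPend c) = fst c" | "pcol _ = None"

fun Fe :: "nat \<Rightarrow> lab \<Rightarrow> vtype \<times> bool \<times> bool \<times> bool \<times> vtype \<Rightarrow> bool" where
  "Fe m (LOne q) (tx,D,I,A,ty) = (isB tx \<and> (if isB ty then D \<noteq> q else \<not> q))"
| "Fe m (LE q j) (tx,D,I,A,ty) = (j \<in> {1..m} \<and> isB tx \<and> (if isB ty then D \<noteq> q else \<not> q) \<and> bcol tx = Some j)"
| "Fe m (LN q j) (tx,D,I,A,ty) = (j \<in> {1..m} \<and> isB tx \<and> (if isB ty then D \<noteq> q else \<not> q) \<and> bcnt tx j)"
| "Fe m (LC j) (tx,D,I,A,ty) = (j \<in> {1..m} \<and> ccol tx = Some j)"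
| "Fe m (LP j) (tx,D,I,A,ty) = (j \<in> {1..m} \<and> pcol tx = Some j)"
| "Fe m LEY (tx,D,I,A,ty) = I"
| "Fe m LNY (tx,D,I,A,ty) = (isB tx \<and> isB ty \<and> D \<and> A)"

fun ykt :: "nat \<Rightarrow> vtype \<Rightarrow> ykind" where
  "ykt m (TBase c) = YBase (\<lambda>i. i \<in> {1..m} \<and> fst c = Some i) (\<lambda>i. i \<in> {1..m} \<and> count (snd c) (Some i) = 1)"
| "ykt m (TConn c) = YConn (the (fst c))"
| "ykt m (TPend c) = YPend (the (fst c))"

definition PAt :: "nat \<Rightarrow> colour1 list \<Rightarrow> nat \<Rightarrow> nat \<Rightarrow> bool" where
  "PAt m ts i j = (i \<in> {1..m} \<and> j \<in> {1..m} \<and> count (snd (ts ! (i - 1))) (Some j) = 1)"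

definition s_of :: "('a,'b) gvert \<Rightarrow> ('a,'b) gvert \<Rightarrow> bool" where
  "s_of y x = (case y of VA _ \<Rightarrow> True | VB _ \<Rightarrow> False | _ \<Rightarrow> (case x of VB _ \<Rightarrow> False | _ \<Rightarrow> True))"

locale gp =
  fixes SA :: "'a set" and EA :: "'a \<Rightarrow> 'a \<Rightarrow> bool" and a :: "nat \<Rightarrow> 'a"
    and SB :: "'b set" and EB :: "'b \<Rightarrow> 'b \<Rightarrow> bool" and b :: "nat \<Rightarrow> 'b"
    and m n d lam mu :: nat
  assumes vp: "valid_pair SA EA a SB EB b m n d lam mu"
begin

abbreviation "V \<equiv> gverts SA SB m"
abbreviation "Ad \<equiv> gadj EA EB a b m"

lemma sgA: "simple_graph SA EA" and sgB: "simple_graph SB EB"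
  using vp unfolding valid_pair_def strongly_regular_def by auto

lemma finA: "finite SA" and finB: "finite SB" using sgA sgB unfolding simple_graph_def by auto
lemma EA_in: "EA x y \<Longrightarrow> x \<in> SA \<and> y \<in> SA" using sgA unfolding simple_graph_def by auto
lemma EB_in: "EB x y \<Longrightarrow> x \<in> SB \<and> y \<in> SB" using sgB unfolding simple_graph_def by auto
lemma EA_sym: "EA x y \<Longrightarrow> EA y x" using sgA unfolding simple_graph_def by auto
lemma EB_sym: "EB x y \<Longrightarrow> EB y x" using sgB unfolding simple_graph_def by auto
lemma EA_irr: "\<not> EA x x" using sgA unfolding simple_graph_def by auto
lemma EB_irr: "\<not> EB x x" using sgB unfolding simple_graph_def by auto
lemma injA: "inj_on a {1..m}" and injB: "inj_on b {1..m}"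
  using vp unfolding valid_pair_def by auto
lemma aV: "i \<in> {1..m} \<Longrightarrow> a i \<in> SA" and bV: "i \<in> {1..m} \<Longrightarrow> b i \<in> SB"
  using vp unfolding valid_pair_def by auto
lemma colab: "i \<in> {1..m} \<Longrightarrow> col1 SA EA a m (a i) = col1 SB EB b m (b i)"
  using vp unfolding valid_pair_def by auto

lemma srg_count:
  assumes srg: "strongly_regular W E n d lam mu" and xW: "x \<in> W" and yW: "y \<in> W"
  shows "card {z\<in>W. E x z \<and> E z y} = (if x = y then d else if E x y then lam else mu)"
proof -
  have sym: "\<And>u v. E u v \<Longrightarrow> E v u" using srg unfolding strongly_regular_def simple_graph_def by blast
  have deg: "\<forall>x\<in>W. card {y\<in>W. E x y} = d" using srg unfolding strongly_regular_def by blast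
  have la: "\<forall>x\<in>W. \<forall>y\<in>W. x \<noteq> y \<longrightarrow> E x y \<longrightarrow> card {z\<in>W. E x z \<and> E y z} = lam"
    using srg unfolding strongly_regular_def by blast
  have mu: "\<forall>x\<in>W. \<forall>y\<in>W. x \<noteq> y \<longrightarrow> \<not> E x y \<longrightarrow> card {z\<in>W. E x z \<and> E y z} = mu"
    using srg unfolding strongly_regular_def by blast
  have eq: "{z\<in>W. E x z \<and> E z y} = {z\<in>W. E x z \<and> E y z}" using sym by blast
  show ?thesis
  proof (cases "x = y")
    case True
    then have "{z\<in>W. E x z \<and> E z y} = {z\<in>W. E x z}" using sym by blast
    then show ?thesis using True deg xW by simp
  next
    case False
    then show ?thesis unfolding eq using la mu xW yW by simp
  qed
qed

lemma srgA: "x \<in> SA \<Longrightarrow> y \<in> SA \<Longrightarrow> card {z\<in>SA. EA x z \<and> EA z y} = (if x = y then d else if EA x y then lam else mu)"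
  using srg_count[of SA EA] vp unfolding valid_pair_def by blast
lemma srgB: "x \<in> SB \<Longrightarrow> y \<in> SB \<Longrightarrow> card {z\<in>SB. EB x z \<and> EB z y} = (if x = y then d else if EB x y then lam else mu)"
  using srg_count[of SB EB] vp unfolding valid_pair_def by blast
lemma degA: "x \<in> SA \<Longrightarrow> card {z\<in>SA. EA x z} = d"
  using vp unfolding valid_pair_def strongly_regular_def by simp
lemma degB: "x \<in> SB \<Longrightarrow> card {z\<in>SB. EB x z} = d"
  using vp unfolding valid_pair_def strongly_regular_def by simp

lemma PAB: "i \<in> {1..m} \<Longrightarrow> j \<in> {1..m} \<Longrightarrow> EB (b i) (b j) = EA (a i) (a j)"
proof -
  assume i: "i \<in> {1..m}" and j: "j \<in> {1..m}"
  have sa: "a ` {1..m} \<subseteq> SA" and sb: "b ` {1..m} \<subseteq> SB" using aV bV by auto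
  have 1: "count (snd (col1 SA EA a m (a i))) (Some j) = (if j \<in> {1..m} \<and> EA (a i) (a j) then 1 else 0)"
    by (rule count_col1[OF injA sa finA])
  have 2: "count (snd (col1 SB EB b m (b i))) (Some j) = (if j \<in> {1..m} \<and> EB (b i) (b j) then 1 else 0)"
    by (rule count_col1[OF injB sb finB])
  have "count (snd (col1 SA EA a m (a i))) (Some j) = count (snd (col1 SB EB b m (b i))) (Some j)"
    by (simp only: colab[OF i])
  then have "(if j \<in> {1..m} \<and> EA (a i) (a j) then 1 else 0::nat) = (if j \<in> {1..m} \<and> EB (b i) (b j) then 1 else 0)"
    by (simp only: 1 2)
  then show ?thesis using j by (cases "EA (a i) (a j)"; cases "EB (b i) (b j)") auto
qed

lemma nbA:
  assumes "u \<in> SA"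
  shows "(\<Sum>z\<in>{z\<in>V. Ad (VA u) z}. g z) = (\<Sum>w\<in>{w\<in>SA. EA u w}. g (VA w)) + (\<Sum>i\<in>{i\<in>{1..m}. a i = u}. g (VC i))"
proof -
  have eq: "{z\<in>V. Ad (VA u) z} = VA ` {w\<in>SA. EA u w} \<union> VC ` {i\<in>{1..m}. a i = u}"
  proof (intro set_eqI iffI)
    fix z :: "('a,'b) gvert" assume "z \<in> {z\<in>V. Ad (VA u) z}"
    then show "z \<in> VA ` {w\<in>SA. EA u w} \<union> VC ` {i\<in>{1..m}. a i = u}"
      by (cases z) (auto simp: gverts_def)
  next
    fix z :: "('a,'b) gvert" assume "z \<in> VA ` {w\<in>SA. EA u w} \<union> VC ` {i\<in>{1..m}. a i = u}"
    then show "z \<in> {z\<in>V. Ad (VA u) z}" by (auto simp: gverts_def)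
  qed
  have d: "VA ` {w\<in>SA. EA u w} \<inter> VC ` {i\<in>{1..m}. a i = u} = {}" by auto
  have r1: "(\<Sum>z\<in>VA ` {w\<in>SA. EA u w}. g z) = (\<Sum>w\<in>{w\<in>SA. EA u w}. g (VA w))"
    by (rule sum.reindex_cong[where l="VA"]) (auto simp: inj_on_def)
  have r2: "(\<Sum>z\<in>VC ` {i\<in>{1..m}. a i = u}. g z) = (\<Sum>i\<in>{i\<in>{1..m}. a i = u}. g (VC i))"
    by (rule sum.reindex_cong[where l="VC"]) (auto simp: inj_on_def)
  have f1: "finite (VA ` {w\<in>SA. EA u w})" using finA by simp
  have f2: "finite (VC ` {i\<in>{1..m}. a i = u})" by simp
  show ?thesis unfolding eq sum.union_disjoint[OF f1 f2 d] r1 r2 ..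
qed

lemma nbB:
  assumes "u \<in> SB"
  shows "(\<Sum>z\<in>{z\<in>V. Ad (VB u) z}. g z) = (\<Sum>w\<in>{w\<in>SB. EB u w}. g (VB w)) + (\<Sum>i\<in>{i\<in>{1..m}. b i = u}. g (VC i))"
proof -
  have eq: "{z\<in>V. Ad (VB u) z} = VB ` {w\<in>SB. EB u w} \<union> VC ` {i\<in>{1..m}. b i = u}"
  proof (intro set_eqI iffI)
    fix z :: "('a,'b) gvert" assume "z \<in> {z\<in>V. Ad (VB u) z}"
    then show "z \<in> VB ` {w\<in>SB. EB u w} \<union> VC ` {i\<in>{1..m}. b i = u}"
      by (cases z) (auto simp: gverts_def)
  next
    fix z :: "('a,'b) gvert" assume "z \<in> VB ` {w\<in>SB. EB u w} \<union> VC ` {i\<in>{1..m}. b i = u}"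
    then show "z \<in> {z\<in>V. Ad (VB u) z}" by (auto simp: gverts_def)
  qed
  have d: "VB ` {w\<in>SB. EB u w} \<inter> VC ` {i\<in>{1..m}. b i = u} = {}" by auto
  have r1: "(\<Sum>z\<in>VB ` {w\<in>SB. EB u w}. g z) = (\<Sum>w\<in>{w\<in>SB. EB u w}. g (VB w))"
    by (rule sum.reindex_cong[where l="VB"]) (auto simp: inj_on_def)
  have r2: "(\<Sum>z\<in>VC ` {i\<in>{1..m}. b i = u}. g z) = (\<Sum>i\<in>{i\<in>{1..m}. b i = u}. g (VC i))"
    by (rule sum.reindex_cong[where l="VC"]) (auto simp: inj_on_def)
  have f1: "finite (VB ` {w\<in>SB. EB u w})" using finB by simp
  have f2: "finite (VC ` {i\<in>{1..m}. b i = u})" by simp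
  show ?thesis unfolding eq sum.union_disjoint[OF f1 f2 d] r1 r2 ..
qed

lemma nbC:
  assumes "i \<in> {1..m}"
  shows "(\<Sum>z\<in>{z\<in>V. Ad (VC i) z}. g z) = g (VA (a i)) + g (VB (b i)) + (\<Sum>h\<in>{1..i}. g (VP i h))"
proof -
  have eq: "{z\<in>V. Ad (VC i) z} = insert (VA (a i)) (insert (VB (b i)) (VP i ` {1..i}))"
  proof (intro set_eqI iffI)
    fix z :: "('a,'b) gvert" assume "z \<in> {z\<in>V. Ad (VC i) z}"
    then show "z \<in> insert (VA (a i)) (insert (VB (b i)) (VP i ` {1..i}))"
      by (cases z) (auto simp: gverts_def)
  next
    fix z :: "('a,'b) gvert" assume "z \<in> insert (VA (a i)) (insert (VB (b i)) (VP i ` {1..i}))"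
    then show "z \<in> {z\<in>V. Ad (VC i) z}" using assms aV bV by (auto simp: gverts_def)
  qed
  have n1: "VA (a i) \<notin> insert (VB (b i)) (VP i ` {1..i})" by auto
  have n2: "VB (b i) \<notin> VP i ` {1..i}" by auto
  have r: "(\<Sum>z\<in>VP i ` {1..i}. g z) = (\<Sum>h\<in>{1..i}. g (VP i h))"
    by (rule sum.reindex_cong[where l="VP i"]) (auto simp: inj_on_def)
  show ?thesis unfolding eq
    by (simp only: sum.insert[OF _ n1] sum.insert[OF _ n2] finite_insert finite_imageI finite_atLeastAtMost r add.assoc)
qed

lemma nbP:
  assumes "i \<in> {1..m}" "1 \<le> h" "h \<le> i"
  shows "(\<Sum>z\<in>{z\<in>V. Ad (VP i h) z}. g z) = g (VC i)"
proof -
  have eq: "{z\<in>V. Ad (VP i h) z} = {VC i}"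
  proof (intro set_eqI iffI)
    fix z :: "('a,'b) gvert" assume "z \<in> {z\<in>V. Ad (VP i h) z}"
    then show "z \<in> {VC i}" by (cases z) (auto simp: gverts_def)
  next
    fix z :: "('a,'b) gvert" assume "z \<in> {VC i}"
    then show "z \<in> {z\<in>V. Ad (VP i h) z}" using assms by (auto simp: gverts_def)
  qed
  show ?thesis unfolding eq by simp
qed


fun Fb :: "bool \<Rightarrow> ('a,'b) gvert \<Rightarrow> lab \<Rightarrow> ('a,'b) gvert \<Rightarrow> bool" where
  "Fb s y (LOne q) x = (case x of VA _ \<Rightarrow> s \<noteq> q | VB _ \<Rightarrow> s = q | _ \<Rightarrow> False)"
| "Fb s y (LE q j) x = (j \<in> {1..m} \<and> (if s \<noteq> q then x = VA (a j) else x = VB (b j)))"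
| "Fb s y (LN q j) x = (j \<in> {1..m} \<and> (case x of VA u \<Rightarrow> s \<noteq> q \<and> EA u (a j) | VB u \<Rightarrow> s = q \<and> EB u (b j) | _ \<Rightarrow> False))"
| "Fb s y (LC j) x = (j \<in> {1..m} \<and> x = VC j)"
| "Fb s y (LP j) x = (j \<in> {1..m} \<and> (\<exists>h. 1 \<le> h \<and> h \<le> j \<and> x = VP j h))"
| "Fb s y LEY x = (x = y)"
| "Fb s y LNY x = (case x of VA u \<Rightarrow> (case y of VA v \<Rightarrow> EA u v | _ \<Rightarrow> False)
                         | VB u \<Rightarrow> (case y of VB v \<Rightarrow> EB u v | _ \<Rightarrow> False) | _ \<Rightarrow> False)"

definition F :: "bool \<Rightarrow> ('a,'b) gvert \<Rightarrow> lab \<Rightarrow> ('a,'b) gvert \<Rightarrow> int" where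
  "F s y l x = of_bool (Fb s y l x)"

definition PA :: "nat \<Rightarrow> nat \<Rightarrow> bool" where
  "PA i j = (i \<in> {1..m} \<and> j \<in> {1..m} \<and> EA (a i) (a j))"

definition yk :: "('a,'b) gvert \<Rightarrow> ykind" where
  "yk y = (case y of VA u \<Rightarrow> YBase (\<lambda>i. i \<in> {1..m} \<and> a i = u) (\<lambda>i. i \<in> {1..m} \<and> EA (a i) u)
     | VB u \<Rightarrow> YBase (\<lambda>i. i \<in> {1..m} \<and> b i = u) (\<lambda>i. i \<in> {1..m} \<and> EB (b i) u)
     | VC j \<Rightarrow> YConn j | VP j h \<Rightarrow> YPend j)"

definition sok :: "bool \<Rightarrow> ('a,'b) gvert \<Rightarrow> bool" where
  "sok s y = ((\<forall>u. y = VA u \<longrightarrow> s) \<and> (\<forall>u. y = VB u \<longrightarrow> \<not> s))"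

lemma sum_ob_eq: "finite S \<Longrightarrow> (\<Sum>w\<in>S. (of_bool (P \<and> w = c) :: int)) = of_bool (P \<and> c \<in> S)"
  by (cases P) (simp_all add: sum.delta)

lemma sumA1: "(\<Sum>w\<in>{w\<in>SA. EA u w}. (of_bool (w = c) :: int)) = of_bool (c \<in> SA \<and> EA u c)"
  using sum_ob_eq[of "{w\<in>SA. EA u w}" True c] finA by simp
lemma sumB1: "(\<Sum>w\<in>{w\<in>SB. EB u w}. (of_bool (w = c) :: int)) = of_bool (c \<in> SB \<and> EB u c)"
  using sum_ob_eq[of "{w\<in>SB. EB u w}" True c] finB by simp

lemma sum_ob_card: "finite S \<Longrightarrow> (\<Sum>w\<in>S. (of_bool (P w)::int)) = int (card {w\<in>S. P w})"
  by (simp add: Int_def)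

lemma sumA_card: "(\<Sum>w\<in>{w\<in>SA. EA u w}. (of_bool (EA w c)::int)) = int (card {w\<in>SA. EA u w \<and> EA w c})"
proof -
  have "{w\<in>{w\<in>SA. EA u w}. EA w c} = {w\<in>SA. EA u w \<and> EA w c}" by auto
  then show ?thesis using sum_ob_card[of "{w\<in>SA. EA u w}" "\<lambda>w. EA w c"] finA by simp
qed
lemma sumB_card: "(\<Sum>w\<in>{w\<in>SB. EB u w}. (of_bool (EB w c)::int)) = int (card {w\<in>SB. EB u w \<and> EB w c})"
proof -
  have "{w\<in>{w\<in>SB. EB u w}. EB w c} = {w\<in>SB. EB u w \<and> EB w c}" by auto
  then show ?thesis using sum_ob_card[of "{w\<in>SB. EB u w}" "\<lambda>w. EB w c"] finB by simp
qed
lemma srgA': "u \<in> SA \<Longrightarrow> c \<in> SA \<Longrightarrow> int (card {w\<in>SA. EA u w \<and> EA w c}) =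
   (int d - int mu) * of_bool (u = c) + (int lam - int mu) * of_bool (EA u c) + int mu"
  using srgA[of u c] EA_irr by auto
lemma srgB': "u \<in> SB \<Longrightarrow> c \<in> SB \<Longrightarrow> int (card {w\<in>SB. EB u w \<and> EB w c}) =
   (int d - int mu) * of_bool (u = c) + (int lam - int mu) * of_bool (EB u c) + int mu"
  using srgB[of u c] EB_irr by auto

lemma sumC: "(\<Sum>i\<in>{1..m}. cf i * F s y (LC i) x) = (case x of VC j \<Rightarrow> if j \<in> {1..m} then cf j else 0 | _ \<Rightarrow> 0)"
proof (cases x)
  case (VC j)
  have "(\<Sum>i\<in>{1..m}. cf i * F s y (LC i) x) = (\<Sum>i\<in>{1..m}. if i = j then cf i else 0)"
    by (rule sum.cong) (auto simp: F_def VC)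
  also have "\<dots> = (if j \<in> {1..m} then cf j else 0)" by (simp add: sum.delta')
  finally show ?thesis using VC by simp
qed (auto simp: F_def)

lemma clA:
  assumes u: "u \<in> SA" and y: "y \<in> V" and sk: "sok s y"
  shows "(\<Sum>z\<in>{z\<in>V. Ad (VA u) z}. F s y l z) = ev (F s y) (Rl d lam mu m PA (yk y) l) (VA u)"
proof (cases l)
  case (LOne q)
  have "(\<Sum>w\<in>{w\<in>SA. EA u w}. F s y l (VA w)) = int d * of_bool (s \<noteq> q)"
    using degA[OF u] by (simp add: F_def LOne)
  then show ?thesis using u by (auto simp add: F_def sumC nbA[OF u] LOne)
next
  case (LE q j)
  have "(\<Sum>w\<in>{w\<in>SA. EA u w}. F s y l (VA w)) = of_bool (j \<in> {1..m} \<and> s \<noteq> q \<and> EA u (a j))"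
  proof -
    have "(\<Sum>w\<in>{w\<in>SA. EA u w}. F s y l (VA w)) = (\<Sum>w\<in>{w\<in>SA. EA u w}. of_bool ((j \<in> {1..m} \<and> s \<noteq> q) \<and> w = a j))"
      by (rule sum.cong) (auto simp: F_def LE)
    also have "\<dots> = of_bool ((j \<in> {1..m} \<and> s \<noteq> q) \<and> a j \<in> {w\<in>SA. EA u w})"
      using finA by (intro sum_ob_eq) simp
    finally show ?thesis using EA_in by auto
  qed
  then show ?thesis using u by (auto simp add: F_def sumC nbA[OF u] LE)
next
  case (LN q j)
  show ?thesis
  proof (cases "j \<in> {1..m}")
    case True
    have "(\<Sum>w\<in>{w\<in>SA. EA u w}. F s y l (VA w)) = of_bool (s \<noteq> q) * (\<Sum>w\<in>{w\<in>SA. EA u w}. (of_bool (EA w (a j))::int))"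
      unfolding sum_distrib_left by (rule sum.cong) (use True in \<open>auto simp: F_def LN\<close>)
    also have "\<dots> = of_bool (s \<noteq> q) * ((int d - int mu) * of_bool (u = a j) + (int lam - int mu) * of_bool (EA u (a j)) + int mu)"
      by (simp only: sumA_card srgA'[OF u aV[OF True]])
    finally show ?thesis using u True by (auto simp add: F_def sumC nbA[OF u] LN)
  next
    case False
    then show ?thesis using u by (auto simp add: F_def sumC nbA[OF u] LN)
  qed
next
  case (LC j)
  then show ?thesis using u by (auto simp add: F_def sumC nbA[OF u])
next
  case (LP j)
  then show ?thesis using u by (auto simp add: F_def sumC nbA[OF u])
next
  case LEY
  then show ?thesis using u y by (cases y) (auto simp add: F_def sumC yk_def nbA[OF u] sumA1 dest: EA_in)
next
  case LNY
  show ?thesis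
  proof (cases y)
    case (VA v)
    have v: "v \<in> SA" and ss: s using y sk VA by (auto simp: gverts_def sok_def)
    have "(\<Sum>w\<in>{w\<in>SA. EA u w}. F s y l (VA w)) = (\<Sum>w\<in>{w\<in>SA. EA u w}. (of_bool (EA w v)::int))"
      by (rule sum.cong) (auto simp: F_def LNY VA)
    also have "\<dots> = (int d - int mu) * of_bool (u = v) + (int lam - int mu) * of_bool (EA u v) + int mu"
      by (simp only: sumA_card srgA'[OF u v])
    finally show ?thesis using u ss by (auto simp add: F_def sumC nbA[OF u] LNY VA yk_def)
  next
    case (VB v)
    have ss: "\<not> s" using sk VB by (auto simp: sok_def)
    then show ?thesis using u by (auto simp add: F_def sumC nbA[OF u] LNY VB yk_def)
  qed (auto simp add: F_def sumC nbA[OF u] LNY yk_def)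
qed

lemma clB:
  assumes u: "u \<in> SB" and y: "y \<in> V" and sk: "sok s y"
  shows "(\<Sum>z\<in>{z\<in>V. Ad (VB u) z}. F s y l z) = ev (F s y) (Rl d lam mu m PA (yk y) l) (VB u)"
proof (cases l)
  case (LOne q)
  have "(\<Sum>w\<in>{w\<in>SB. EB u w}. F s y l (VB w)) = int d * of_bool (s = q)"
    using degB[OF u] by (simp add: F_def LOne)
  then show ?thesis using u by (auto simp add: F_def sumC nbB[OF u] LOne)
next
  case (LE q j)
  have "(\<Sum>w\<in>{w\<in>SB. EB u w}. F s y l (VB w)) = of_bool (j \<in> {1..m} \<and> s = q \<and> EB u (b j))"
  proof -
    have "(\<Sum>w\<in>{w\<in>SB. EB u w}. F s y l (VB w)) = (\<Sum>w\<in>{w\<in>SB. EB u w}. of_bool ((j \<in> {1..m} \<and> s = q) \<and> w = b j))"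
      by (rule sum.cong) (auto simp: F_def LE)
    also have "\<dots> = of_bool ((j \<in> {1..m} \<and> s = q) \<and> b j \<in> {w\<in>SB. EB u w})"
      using finB by (intro sum_ob_eq) simp
    finally show ?thesis using EB_in by auto
  qed
  then show ?thesis using u by (auto simp add: F_def sumC nbB[OF u] LE)
next
  case (LN q j)
  show ?thesis
  proof (cases "j \<in> {1..m}")
    case True
    have "(\<Sum>w\<in>{w\<in>SB. EB u w}. F s y l (VB w)) = of_bool (s = q) * (\<Sum>w\<in>{w\<in>SB. EB u w}. (of_bool (EB w (b j))::int))"
      unfolding sum_distrib_left by (rule sum.cong) (use True in \<open>auto simp: F_def LN\<close>)
    also have "\<dots> = of_bool (s = q) * ((int d - int mu) * of_bool (u = b j) + (int lam - int mu) * of_bool (EB u (b j)) + int mu)"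
      by (simp only: sumB_card srgB'[OF u bV[OF True]])
    finally show ?thesis using u True by (auto simp add: F_def sumC nbB[OF u] LN)
  next
    case False
    then show ?thesis using u by (auto simp add: F_def sumC nbB[OF u] LN)
  qed
next
  case (LC j)
  then show ?thesis using u by (auto simp add: F_def sumC nbB[OF u])
next
  case (LP j)
  then show ?thesis using u by (auto simp add: F_def sumC nbB[OF u])
next
  case LEY
  then show ?thesis using u y by (cases y) (auto simp add: F_def sumC yk_def nbB[OF u] sumB1 dest: EB_in)
next
  case LNY
  show ?thesis
  proof (cases y)
    case (VB v)
    have v: "v \<in> SB" and ss: "\<not> s" using y sk VB by (auto simp: gverts_def sok_def)
    have "(\<Sum>w\<in>{w\<in>SB. EB u w}. F s y l (VB w)) = (\<Sum>w\<in>{w\<in>SB. EB u w}. (of_bool (EB w v)::int))"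
      by (rule sum.cong) (auto simp: F_def LNY VB)
    also have "\<dots> = (int d - int mu) * of_bool (u = v) + (int lam - int mu) * of_bool (EB u v) + int mu"
      by (simp only: sumB_card srgB'[OF u v])
    finally show ?thesis using u ss by (auto simp add: F_def sumC nbB[OF u] LNY VB yk_def)
  next
    case (VA v)
    have ss: "s" using sk VA by (auto simp: sok_def)
    then show ?thesis using u by (auto simp add: F_def sumC nbB[OF u] LNY VA yk_def)
  qed (auto simp add: F_def sumC nbB[OF u] LNY yk_def)
qed


lemma ainj: "i \<in> {1..m} \<Longrightarrow> j \<in> {1..m} \<Longrightarrow> a i = a j \<longleftrightarrow> i = j"
  using injA by (auto dest: inj_onD)
lemma binj: "i \<in> {1..m} \<Longrightarrow> j \<in> {1..m} \<Longrightarrow> b i = b j \<longleftrightarrow> i = j"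
  using injB by (auto dest: inj_onD)

lemma finV: "finite V"
proof -
  have "{VP i h |i h. 1 \<le> i \<and> i \<le> m \<and> 1 \<le> h \<and> h \<le> i} \<subseteq> (\<lambda>(i,h). VP i h) ` ({1..m} \<times> {1..m})"
    by auto
  then have "finite ({VP i h |i h. 1 \<le> i \<and> i \<le> m \<and> 1 \<le> h \<and> h \<le> i} :: ('a,'b) gvert set)"
    by (rule finite_subset) simp
  then show ?thesis unfolding gverts_def using finA finB by simp
qed

lemma clC:
  assumes i: "i \<in> {1..m}" and y: "y \<in> V" and sk: "sok s y"
  shows "(\<Sum>z\<in>{z\<in>V. Ad (VC i) z}. F s y l z) = ev (F s y) (Rl d lam mu m PA (yk y) l) (VC i)"
proof (cases l)
  case (LOne q)
  then show ?thesis using i unfolding nbC[OF i] by (auto simp add: F_def sumC)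
next
  case (LE q j)
  then show ?thesis using i unfolding nbC[OF i] by (auto simp add: F_def sumC ainj binj)
next
  case (LN q j)
  then show ?thesis using i unfolding nbC[OF i] by (auto simp add: F_def sumC PAB PA_def)
next
  case (LC j)
  then show ?thesis using i unfolding nbC[OF i] by (auto simp add: F_def sumC)
next
  case (LP j)
  show ?thesis
  proof (cases "i = j")
    case True
    have "(\<Sum>h\<in>{1..i}. F s y l (VP i h)) = (\<Sum>h\<in>{1..i}. 1)"
      by (rule sum.cong) (use i True in \<open>auto simp: F_def LP\<close>)
    then show ?thesis using i True unfolding nbC[OF i] by (auto simp add: F_def sumC LP)
  next
    case False
    have "(\<Sum>h\<in>{1..i}. F s y l (VP i h)) = (\<Sum>h\<in>{1..i}. 0)"
      by (rule sum.cong) (use i False in \<open>auto simp: F_def LP\<close>)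
    then show ?thesis using i False unfolding nbC[OF i] by (auto simp add: F_def sumC LP)
  qed
next
  case LEY
  show ?thesis
  proof (cases y)
    case (VP j h0)
    have h0: "1 \<le> h0" "h0 \<le> j" using y VP by (auto simp: gverts_def)
    show ?thesis
    proof (cases "i = j")
      case True
      have "(\<Sum>h\<in>{1..i}. F s y l (VP i h)) = (\<Sum>h\<in>{1..i}. of_bool (h = h0))"
        by (rule sum.cong) (use i True VP in \<open>auto simp: F_def LEY\<close>)
      also have "\<dots> = 1" using h0 True by (simp add: sum.delta')
      finally show ?thesis using i True VP unfolding nbC[OF i] by (auto simp add: F_def sumC LEY yk_def)
    next
      case False
      have "(\<Sum>h\<in>{1..i}. F s y l (VP i h)) = (\<Sum>h\<in>{1..i}. 0)"
        by (rule sum.cong) (use i False VP in \<open>auto simp: F_def LEY\<close>)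
      then show ?thesis using i False VP unfolding nbC[OF i] by (auto simp add: F_def sumC LEY yk_def)
    qed
  qed (use i in \<open>unfold nbC[OF i], auto simp add: F_def sumC LEY yk_def\<close>)
next
  case LNY
  then show ?thesis using i unfolding nbC[OF i] by (cases y) (auto simp add: F_def sumC yk_def)
qed

lemma clP:
  assumes i: "i \<in> {1..m}" and h: "1 \<le> h" "h \<le> i" and y: "y \<in> V" and sk: "sok s y"
  shows "(\<Sum>z\<in>{z\<in>V. Ad (VP i h) z}. F s y l z) = ev (F s y) (Rl d lam mu m PA (yk y) l) (VP i h)"
proof (cases l)
  case LEY
  then show ?thesis using i h y unfolding nbP[OF i h] by (cases y) (auto simp add: F_def sumC yk_def)
next
  case LNY
  then show ?thesis using i h unfolding nbP[OF i h] by (cases y) (auto simp add: F_def sumC yk_def)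
qed (use i h in \<open>unfold nbP[OF i h], auto simp add: F_def sumC\<close>)

lemma clos:
  assumes x: "x \<in> V" and y: "y \<in> V" and sk: "sok s y"
  shows "(\<Sum>z\<in>{z\<in>V. Ad x z}. F s y l z) = ev (F s y) (Rl d lam mu m PA (yk y) l) x"
  using x clA[OF _ y sk] clB[OF _ y sk] clC[OF _ y sk] clP[OF _ _ _ y sk]
  by (cases x) (auto simp: gverts_def)

lemma walks_F:
  assumes x: "x \<in> V" and y: "y \<in> V" and sk: "sok s y"
  shows "int (walks V Ad k x y) = ev (F s y) ((stp (Rl d lam mu m PA (yk y)) ^^ k) [(1, LEY)]) x"
  by (rule walks_ev[OF _ clos[OF _ y sk] _ x])
     (auto simp: F_def finV)


lemma col0A: "u \<in> SA \<Longrightarrow> fst (col1 SA EA a m u) = Some j \<longleftrightarrow> j \<in> {1..m} \<and> a j = u"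
  using col0_Some_iff[OF injA] by (simp add: col1_def)
lemma col0B: "u \<in> SB \<Longrightarrow> fst (col1 SB EB b m u) = Some j \<longleftrightarrow> j \<in> {1..m} \<and> b j = u"
  using col0_Some_iff[OF injB] by (simp add: col1_def)
lemma cntA: "count (snd (col1 SA EA a m u)) (Some j) = 1 \<longleftrightarrow> j \<in> {1..m} \<and> EA u (a j)"
proof -
  have "a ` {1..m} \<subseteq> SA" using aV by auto
  from count_col1[OF injA this finA, of EA u j] show ?thesis by simp
qed
lemma cntB: "count (snd (col1 SB EB b m u)) (Some j) = 1 \<longleftrightarrow> j \<in> {1..m} \<and> EB u (b j)"
proof -
  have "b ` {1..m} \<subseteq> SB" using bV by auto
  from count_col1[OF injB this finB, of EB u j] show ?thesis by simp
qed
lemma cntA': "count (snd (col1 SA EA a m u)) (Some j) = Suc 0 \<longleftrightarrow> j \<in> {1..m} \<and> EA u (a j)"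
  using cntA by simp
lemma cntB': "count (snd (col1 SB EB b m u)) (Some j) = Suc 0 \<longleftrightarrow> j \<in> {1..m} \<and> EB u (b j)"
  using cntB by simp
lemma col0a: "i \<in> {1..m} \<Longrightarrow> fst (col1 SA EA a m (a i)) = Some i"
  using col0A[OF aV] by auto
lemma thecol: "i \<in> {1..m} \<Longrightarrow> fst (col1 SA EA a m (a i)) = Some j \<longleftrightarrow> j = i"
  using col0A[OF aV, of i j] ainj[of j i] by auto

lemma sok_of: "sok (s_of y x) y"
  by (cases y) (auto simp: sok_def s_of_def)

lemma yk_eq: "y \<in> V \<Longrightarrow> yk y = ykt m (gtau SA EA a SB EB b m y)"
proof (cases y)
  case (VA u)
  assume "y \<in> V"
  then have u: "u \<in> SA" using VA by (auto simp: gverts_def)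
  show ?thesis using u VA by (auto simp: yk_def col0A cntA cntA' intro!: ext dest: EA_sym)
next
  case (VB u)
  assume "y \<in> V"
  then have u: "u \<in> SB" using VB by (auto simp: gverts_def)
  show ?thesis using u VB by (auto simp: yk_def col0B cntB cntB' intro!: ext dest: EB_sym)
next
  case (VC j)
  assume "y \<in> V"
  then have j: "j \<in> {1..m}" using VC by (auto simp: gverts_def)
  show ?thesis using j VC col0a by (simp add: yk_def)
next
  case (VP j h)
  assume "y \<in> V"
  then have j: "j \<in> {1..m}" using VP by (auto simp: gverts_def)
  show ?thesis using j VP col0a by (simp add: yk_def)
qed

lemma PA_eq: "PA = PAt m (tau_seq SA EA a m)"
proof (intro ext)
  fix i j
  show "PA i j = PAt m (tau_seq SA EA a m) i j"
  proof (cases "i \<in> {1..m}")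
    case True
    have "tau_seq SA EA a m ! (i - 1) = col1 SA EA a m (a i)"
    proof -
      have l: "i - 1 < length [1..<m+1]" using True by auto
      have "[1..<m+1] ! (i - 1) = i" using True by (subst nth_upt) auto
      then show ?thesis unfolding tau_seq_def nth_map[OF l] by simp
    qed
    then show ?thesis using True by (auto simp: PA_def PAt_def cntA cntA')
  next
    case False
    then show ?thesis unfolding PA_def PAt_def by blast
  qed
qed

lemma Fb_eta:
  assumes x: "x \<in> V" and y: "y \<in> V"
  shows "Fb (s_of y x) y l x = Fe m l (eta SA EA a SB EB b m x y)"
proof -
  consider (A) u where "x = VA u" "u \<in> SA" | (B) u where "x = VB u" "u \<in> SB"
    | (C) i where "x = VC i" "i \<in> {1..m}" | (P) i h where "x = VP i h" "i \<in> {1..m}" "1 \<le> h" "h \<le> i"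
    using x by (auto simp: gverts_def)
  then show ?thesis
  proof cases
    case A
    then show ?thesis using y by (cases y; cases l) (auto simp: s_of_def eta_def col0A cntA cntA' gverts_def)
  next
    case B
    then show ?thesis using y by (cases y; cases l) (auto simp: s_of_def eta_def col0B cntB cntB' gverts_def)
  next
    case C
    then show ?thesis using y by (cases y; cases l) (auto simp: s_of_def eta_def thecol gverts_def)
  next
    case P
    then show ?thesis using y by (cases y; cases l) (auto simp: s_of_def eta_def thecol gverts_def)
  qed
qed

end


theorem claim2:
  fixes VA1 :: "'a set" and EA1 :: "'a \<Rightarrow> 'a \<Rightarrow> bool" and a1 :: "nat \<Rightarrow> 'a"
    and VB1 :: "'b set" and EB1 :: "'b \<Rightarrow> 'b \<Rightarrow> bool" and b1 :: "nat \<Rightarrow> 'b"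
    and VA2 :: "'c set" and EA2 :: "'c \<Rightarrow> 'c \<Rightarrow> bool" and a2 :: "nat \<Rightarrow> 'c"
    and VB2 :: "'d set" and EB2 :: "'d \<Rightarrow> 'd \<Rightarrow> bool" and b2 :: "nat \<Rightarrow> 'd"
    and m1 m2 n d lam mu :: nat
    and x1 y1 :: "('a, 'b) gvert" and x2 y2 :: "('c, 'd) gvert"
  assumes "valid_pair VA1 EA1 a1 VB1 EB1 b1 m1 n d lam mu"
    and "valid_pair VA2 EA2 a2 VB2 EB2 b2 m2 n d lam mu"
    and "tau_seq VA1 EA1 a1 m1 = tau_seq VA2 EA2 a2 m2"
    and "x1 \<in> gverts VA1 VB1 m1" and "y1 \<in> gverts VA1 VB1 m1"
    and "x2 \<in> gverts VA2 VB2 m2" and "y2 \<in> gverts VA2 VB2 m2"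
    and "eta VA1 EA1 a1 VB1 EB1 b1 m1 x1 y1 = eta VA2 EA2 a2 VB2 EB2 b2 m2 x2 y2"
  shows "\<forall>k. walks (gverts VA1 VB1 m1) (gadj EA1 EB1 a1 b1 m1) k x1 y1
           = walks (gverts VA2 VB2 m2) (gadj EA2 EB2 a2 b2 m2) k x2 y2"
proof -
  interpret g1: gp VA1 EA1 a1 VB1 EB1 b1 m1 n d lam mu by unfold_locales (rule assms(1))
  interpret g2: gp VA2 EA2 a2 VB2 EB2 b2 m2 n d lam mu by unfold_locales (rule assms(2))
  have mm: "m1 = m2" using arg_cong[OF assms(3), of length] by (simp del: upt_Suc add: tau_seq_def)
  have PA: "g1.PA = g2.PA" using g1.PA_eq g2.PA_eq assms(3) mm by simp
  have gt: "gtau VA1 EA1 a1 VB1 EB1 b1 m1 y1 = gtau VA2 EA2 a2 VB2 EB2 b2 m2 y2"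
    using assms(8) unfolding eta_def by simp
  have yk: "g1.yk y1 = g2.yk y2" using g1.yk_eq[OF assms(5)] g2.yk_eq[OF assms(7)] gt mm by simp
  show ?thesis
  proof
    fix k
    let ?E = "(stp (Rl d lam mu m1 g1.PA (g1.yk y1)) ^^ k) [(1, LEY)]"
    have 1: "int (walks (gverts VA1 VB1 m1) (gadj EA1 EB1 a1 b1 m1) k x1 y1) = ev (g1.F (s_of y1 x1) y1) ?E x1"
      by (rule g1.walks_F[OF assms(4,5) g1.sok_of])
    have 2: "int (walks (gverts VA2 VB2 m2) (gadj EA2 EB2 a2 b2 m2) k x2 y2) = ev (g2.F (s_of y2 x2) y2) ?E x2"
      using g2.walks_F[OF assms(6,7) g2.sok_of, of k] mm PA yk by simp
    have 3: "ev (g1.F (s_of y1 x1) y1) ?E x1 = ev (g2.F (s_of y2 x2) y2) ?E x2"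
    proof (rule ev_cong)
      fix l
      have f1: "g1.F (s_of y1 x1) y1 l x1 = of_bool (Fe m1 l (eta VA1 EA1 a1 VB1 EB1 b1 m1 x1 y1))"
        unfolding g1.F_def g1.Fb_eta[OF assms(4,5)] ..
      have f2: "g2.F (s_of y2 x2) y2 l x2 = of_bool (Fe m2 l (eta VA2 EA2 a2 VB2 EB2 b2 m2 x2 y2))"
        unfolding g2.F_def g2.Fb_eta[OF assms(6,7)] ..
      have fe: "Fe m1 l (eta VA1 EA1 a1 VB1 EB1 b1 m1 x1 y1) = Fe m2 l (eta VA2 EA2 a2 VB2 EB2 b2 m2 x2 y2)"
        using assms(8) mm by simp
      show "g1.F (s_of y1 x1) y1 l x1 = g2.F (s_of y2 x2) y2 l x2"
        by (simp only: f1 f2 fe)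
    qed
    from 1 2 3 show "walks (gverts VA1 VB1 m1) (gadj EA1 EB1 a1 b1 m1) k x1 y1
           = walks (gverts VA2 VB2 m2) (gadj EA2 EB2 a2 b2 m2) k x2 y2" by simp
  qed
qed

end
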